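(* For every $n\ge 2$, if $\Delta,\Delta'\in\mathcal{P}_n$ form a special pair for rule $162$, then $lab_\Delta((i+1,i))=lab_{\Delta'}((i+1,i))$ for all $i\in\mathbb{Z}_n$.
   Context: Cells are indexed by $\mathbb{Z}_n=\{0,\dots,n-1\}$, indices modulo $n$. Rule $162$ has local rule $r_{162}(x_1,x_2,x_3)=(x_1\vee\neg x_2)\wedge x_3$ and global function $f_{162,n}(x)_i=r_{162}(x_{i-1},x_i,x_{i+1})$. An update schedule is an ordered partition $\Delta=(\Delta_1,\dots,\Delta_k)$ of $\mathbb{Z}_n$ into nonempty blocks; $\mathcal{P}_n$ is the set of them. For a block $B$ let $f^{(B)}(x)_i=f_{162,n}(x)_i$ if $i\in B$ and $x_i$ otherwise; $f^{(\Delta)}_{162,n}=f^{(\Delta_k)}\circ\cdots\circ f^{(\Delta_1)}$. For $u,v\in\mathbb{Z}_n$ with $u\in\Delta_a$, $v\in\Delta_b$, $lab_\Delta((u,v))=\oplus$ if $b\le a$ and $\ominus$ if $a<b$. $\Delta\equiv\Delta'$ iff $lab_\Delta$ and $lab_{\Delta'}$ agree on every arc $(i,i+1)$ and $(i+1,i)$. A pair $\Delta,\Delta'$ is special for rule $162$ if $\Delta\not\equiv\Delta'$ but $f^{(\Delta)}_{162,n}=f^{(\Delta')}_{162,n}$. *)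

theory Defs
  imports Main
begin

text \<open>Configurations are functions nat => bool; only indices 0..n-1 matter (cells of Z_n).\<close>

definition r162 :: "bool \<Rightarrow> bool \<Rightarrow> bool \<Rightarrow> bool" where
  "r162 x1 x2 x3 = ((x1 \<or> \<not> x2) \<and> x3)"

definition f162 :: "nat \<Rightarrow> (nat \<Rightarrow> bool) \<Rightarrow> (nat \<Rightarrow> bool)" where
  "f162 n x = (\<lambda>i. r162 (x ((i + n - 1) mod n)) (x i) (x ((i + 1) mod n)))"

definition block_update :: "nat \<Rightarrow> nat set \<Rightarrow> (nat \<Rightarrow> bool) \<Rightarrow> (nat \<Rightarrow> bool)" where
  "block_update n B x = (\<lambda>i. if i \<in> B then f162 n x i else x i)"

definition ordered_partition :: "nat \<Rightarrow> nat set list \<Rightarrow> bool" where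
  "ordered_partition n D \<longleftrightarrow>
     (\<forall>B\<in>set D. B \<noteq> {}) \<and>
     (\<forall>a<length D. \<forall>b<length D. a \<noteq> b \<longrightarrow> D ! a \<inter> D ! b = {}) \<and>
     \<Union>(set D) = {0..<n}"

text \<open>f^(Delta) = f^(Delta_k) o ... o f^(Delta_1): the first block is applied first.\<close>
definition sched_update :: "nat \<Rightarrow> nat set list \<Rightarrow> (nat \<Rightarrow> bool) \<Rightarrow> (nat \<Rightarrow> bool)" where
  "sched_update n D x = fold (block_update n) D x"

definition blk :: "nat set list \<Rightarrow> nat \<Rightarrow> nat" where
  "blk D u = (THE a. a < length D \<and> u \<in> D ! a)"

datatype label = LPlus | LMinus

definition lab :: "nat set list \<Rightarrow> nat \<Rightarrow> nat \<Rightarrow> label" where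
  "lab D u v = (if blk D v \<le> blk D u then LPlus else LMinus)"

definition sched_equiv :: "nat \<Rightarrow> nat set list \<Rightarrow> nat set list \<Rightarrow> bool" where
  "sched_equiv n D D' \<longleftrightarrow>
     (\<forall>i<n. lab D i ((i + 1) mod n) = lab D' i ((i + 1) mod n) \<and>
            lab D ((i + 1) mod n) i = lab D' ((i + 1) mod n) i)"

definition special_pair162 :: "nat \<Rightarrow> nat set list \<Rightarrow> nat set list \<Rightarrow> bool" where
  "special_pair162 n D D' \<longleftrightarrow>
     \<not> sched_equiv n D D' \<and> (\<forall>x. \<forall>i<n. sched_update n D x i = sched_update n D' x i)"

end

theory Submission
  imports Defs
begin

lemma blk_props:
  assumes op: "ordered_partition n D" and j: "j < n"
  shows "blk D j < length D \<and> j \<in> D ! blk D j \<and> (\<forall>k<length D. j \<in> D ! k \<longrightarrow> k = blk D j)"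
proof -
  have U: "\<Union>(set D) = {0..<n}" and Dj: "\<forall>a<length D. \<forall>b<length D. a \<noteq> b \<longrightarrow> D ! a \<inter> D ! b = {}"
    using op unfolding ordered_partition_def by simp_all
  from U j have "j \<in> \<Union>(set D)" by simp
  then obtain B where "B \<in> set D" "j \<in> B" by blast
  then obtain a where a: "a < length D" "j \<in> D ! a" by (metis in_set_conv_nth)
  have uniq: "\<And>k. k < length D \<Longrightarrow> j \<in> D ! k \<Longrightarrow> k = a"
  proof (rule ccontr)
    fix k assume k: "k < length D" "j \<in> D ! k" "k \<noteq> a"
    have "D ! k \<inter> D ! a = {}" using Dj k(1,3) a(1) by blast
    then show False using k(2) a(2) by blast
  qed
  have "blk D j = a" unfolding blk_def
  proof (rule the_equality)
    show "a < length D \<and> j \<in> D ! a" using a by simp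
  next
    fix k assume "k < length D \<and> j \<in> D ! k" then show "k = a" using uniq by simp
  qed
  then show ?thesis using a uniq by blast
qed

lemma state_val:
  assumes op: "ordered_partition n D" and j: "j < n"
  shows "k \<le> length D \<Longrightarrow> fold (block_update n) (take k D) x j =
     (if k \<le> blk D j then x j else f162 n (fold (block_update n) (take (blk D j) D) x) j)"
proof (induction k)
  case 0 then show ?case by simp
next
  case (Suc k)
  have kl: "k < length D" using Suc.prems by simp
  have eq: "fold (block_update n) (take (Suc k) D) x = block_update n (D ! k) (fold (block_update n) (take k D) x)"
    using kl by (simp add: take_Suc_conv_app_nth)
  have bp: "blk D j < length D" "j \<in> D ! blk D j" "\<forall>k<length D. j \<in> D ! k \<longrightarrow> k = blk D j"
    using blk_props[OF op j] by auto
  show ?case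
  proof (cases "j \<in> D ! k")
    case True
    then have "k = blk D j" using bp kl by auto
    then show ?thesis unfolding eq using True by (simp add: block_update_def)
  next
    case False
    then have "k \<noteq> blk D j" using bp(2) by blast
    moreover have "block_update n (D ! k) (fold (block_update n) (take k D) x) j = fold (block_update n) (take k D) x j"
      using False by (simp add: block_update_def)
    ultimately show ?thesis unfolding eq using Suc.IH kl Suc.prems by auto
  qed
qed

lemma final_val:
  assumes op: "ordered_partition n D" and n: "n \<ge> 2" and i: "i < n"
  shows "sched_update n D (\<lambda>j. j \<noteq> i) i = (blk D i \<le> blk D ((i + 1) mod n))"
proof -
  define x where "x = (\<lambda>j::nat. j \<noteq> i)"
  define i1 where "i1 = (i + 1) mod n"
  have i1: "i1 < n" "i1 \<noteq> i" using n i unfolding i1_def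
    by (auto simp: mod_Suc)
  have prev: "(i1 + n - 1) mod n = i" using n i unfolding i1_def
    by (cases "Suc i = n") (auto simp: mod_Suc)
  define s where "s k = fold (block_update n) (take k D) x" for k
  have S: "\<And>j k. j < n \<Longrightarrow> k \<le> length D \<Longrightarrow> s k j = (if k \<le> blk D j then x j else f162 n (s (blk D j)) j)"
    unfolding s_def using state_val[OF op] by blast
  have bi: "blk D i < length D" using blk_props[OF op i] by auto
  have bi1: "blk D i1 < length D" using blk_props[OF op i1(1)] by auto
  have fin: "sched_update n D x i = f162 n (s (blk D i)) i"
    using S[OF i, of "length D"] bi unfolding sched_update_def s_def by simp
  have si: "s (blk D i) i = False" using S[OF i, of "blk D i"] bi by (simp add: x_def)
  have fin2: "sched_update n D x i = s (blk D i) i1"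
    using fin si unfolding f162_def r162_def i1_def by simp
  show ?thesis
  proof (cases "blk D i \<le> blk D i1")
    case True
    then show ?thesis using fin2 S[OF i1(1), of "blk D i"] bi i1 by (simp add: x_def i1_def)
  next
    case False
    have a: "s (blk D i1) i = False" using S[OF i, of "blk D i1"] False bi1 by (simp add: x_def)
    have b: "s (blk D i1) i1 = True" using S[OF i1(1), of "blk D i1"] bi1 i1 by (simp add: x_def)
    have "s (blk D i) i1 = f162 n (s (blk D i1)) i1" using S[OF i1(1), of "blk D i"] bi False by simp
    also have "\<dots> = False" using a b prev unfolding f162_def r162_def by simp
    finally show ?thesis using fin2 False by (simp add: x_def i1_def)
  qed
qed

theorem mainTheorem19:
  fixes n :: nat and D D' :: "nat set list"
  assumes "n \<ge> 2"
    and "ordered_partition n D" and "ordered_partition n D'"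
    and "special_pair162 n D D'"
  shows "\<forall>i<n. lab D ((i + 1) mod n) i = lab D' ((i + 1) mod n) i"
proof (intro allI impI)
  fix i assume i: "i < n"
  have "sched_update n D (\<lambda>j. j \<noteq> i) i = sched_update n D' (\<lambda>j. j \<noteq> i) i"
    using assms(4) i unfolding special_pair162_def by blast
  then have "(blk D i \<le> blk D ((i + 1) mod n)) = (blk D' i \<le> blk D' ((i + 1) mod n))"
    using final_val[OF assms(2) assms(1) i] final_val[OF assms(3) assms(1) i] by simp
  then show "lab D ((i + 1) mod n) i = lab D' ((i + 1) mod n) i"
    unfolding lab_def by simp
qed

end
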